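(* Assume $V=L$. Every $\eta\in\Xi$ is $\Pi$-isolated, i.e. for every $\xi\in\Xi$ with $\eta\subseteq\xi$ there is a permutation $\pi\in\Pi$ with $\pi(i)=i$ for all $i\in\eta$ and $\xi\cap\{\pi(j):j\in\xi\}=\eta$.
   Context: $T$ is the set of all nonempty finite sequences of countable ordinals, ordered by strict extension $\subset$. $\Xi$ is the set of all at most countable $\xi\subseteq T$ closed downward under $\subset$. Every ordinal $\alpha$ is uniquely $\lambda+m$ with $\lambda$ a limit ordinal or $0$ and $m<\omega$; $\alpha$ is even/odd according to $m$. For $i,j\in T$, $i\equiv j$ means $i,j$ have the same length and $i(k),j(k)$ have the same parity for every $k$. $\Pi$ is the group of all bijections $\pi:T\to T$ such that $i\subset j\iff\pi(i)\subset\pi(j)$ for all $i,j\in T$, and $\pi(i)\equiv i$ for all $i\in T$. *)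

theory Defs
  imports Main "HOL-Library.Sublist" "HOL-Library.Countable_Set"
begin

text \<open>Countable ordinals are modelled by an arbitrary wellorder type 'o whose
  initial segments are countable but which is itself uncountable, i.e. a type of
  order type omega_1.\<close>

definition omega1_type :: "'o::wellorder itself \<Rightarrow> bool" where
  "omega1_type _ \<longleftrightarrow> (\<forall>a::'o. countable {b. b < a}) \<and> \<not> countable (UNIV :: 'o set)"

definition is_succ :: "'o::wellorder \<Rightarrow> 'o \<Rightarrow> bool" where
  "is_succ a b \<longleftrightarrow> a < b \<and> \<not> (\<exists>z. a < z \<and> z < b)"

definition limit_or_zero :: "'o::wellorder \<Rightarrow> bool" where
  "limit_or_zero l \<longleftrightarrow> \<not> (\<exists>a. is_succ a l)"

text \<open>plus_fin l a m  means  a = l + m.\<close>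
inductive plus_fin :: "'o::wellorder \<Rightarrow> 'o \<Rightarrow> nat \<Rightarrow> bool" where
  base: "limit_or_zero l \<Longrightarrow> plus_fin l l 0"
| step: "plus_fin l a m \<Longrightarrow> is_succ a b \<Longrightarrow> plus_fin l b (Suc m)"

definition ord_even :: "'o::wellorder \<Rightarrow> bool" where
  "ord_even a \<longleftrightarrow> (\<exists>l m. limit_or_zero l \<and> plus_fin l a m \<and> even m)"

definition TT :: "'o list set" where
  "TT = {s. s \<noteq> []}"

definition Xi :: "'o list set set" where
  "Xi = {xi. xi \<subseteq> TT \<and> countable xi \<and>
              (\<forall>j\<in>xi. \<forall>i\<in>TT. strict_prefix i j \<longrightarrow> i \<in> xi)}"

definition par_equiv :: "'o::wellorder list \<Rightarrow> 'o list \<Rightarrow> bool" where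
  "par_equiv i j \<longleftrightarrow> length i = length j \<and>
     (\<forall>k < length i. ord_even (i ! k) \<longleftrightarrow> ord_even (j ! k))"

definition PiG :: "('o::wellorder list \<Rightarrow> 'o list) set" where
  "PiG = {p. bij_betw p TT TT \<and>
             (\<forall>i\<in>TT. \<forall>j\<in>TT. strict_prefix i j \<longleftrightarrow> strict_prefix (p i) (p j)) \<and>
             (\<forall>i\<in>TT. par_equiv (p i) i)}"

definition Pi_isolated :: "'o::wellorder list set \<Rightarrow> bool" where
  "Pi_isolated eta \<longleftrightarrow> (\<forall>xi\<in>Xi. eta \<subseteq> xi \<longrightarrow>
     (\<exists>p\<in>PiG. (\<forall>i\<in>eta. p i = i) \<and> xi \<inter> p ` xi = eta))"

end

theory Submission
  imports Defs
begin

lemma succ_unique_pred: "is_succ a b \<Longrightarrow> is_succ a' b \<Longrightarrow> a = a'"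
  unfolding is_succ_def by (metis linorder_neqE)

lemma plus_fin_0: "plus_fin l a 0 \<Longrightarrow> a = l \<and> limit_or_zero l"
  by (cases rule: plus_fin.cases) auto

lemma plus_fin_Suc: "plus_fin l b (Suc k) \<Longrightarrow> \<exists>a. plus_fin l a k \<and> is_succ a b"
  by (cases rule: plus_fin.cases) auto

lemma plus_fin_lim: "plus_fin l a m \<Longrightarrow> limit_or_zero l"
  by (induction rule: plus_fin.induct) auto

lemma plus_fin_uniq: "plus_fin l a m \<Longrightarrow> plus_fin l' a m' \<Longrightarrow> m = m'"
proof (induction m arbitrary: a m')
  case 0
  then have "limit_or_zero a" using plus_fin_0 by blast
  then show ?case using 0 by (cases m') (auto dest!: plus_fin_Suc simp: limit_or_zero_def)
next
  case (Suc k)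
  then obtain a0 where a0: "plus_fin l a0 k" "is_succ a0 a" using plus_fin_Suc by blast
  show ?case
  proof (cases m')
    case 0
    then show ?thesis using Suc.prems a0 by (auto dest!: plus_fin_0 simp: limit_or_zero_def)
  next
    case (Suc k')
    then obtain a1 where "plus_fin l' a1 k'" "is_succ a1 a" using Suc.prems plus_fin_Suc by blast
    then show ?thesis using a0 Suc.IH Suc succ_unique_pred by metis
  qed
qed

lemma plus_fin_ex: "\<exists>l m. plus_fin l (a::'o::wellorder) m"
proof (induction a rule: less_induct)
  case (less a)
  show ?case
  proof (cases "limit_or_zero a")
    case True then show ?thesis using plus_fin.base by blast
  next
    case False
    then obtain a0 where "is_succ a0 a" unfolding limit_or_zero_def by blast
    moreover then have "a0 < a" unfolding is_succ_def by blast
    ultimately show ?thesis using less plus_fin.step by blast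
  qed
qed

lemma succ_parity: "is_succ a b \<Longrightarrow> ord_even b \<longleftrightarrow> \<not> ord_even a"
proof
  assume s: "is_succ a b" and e: "ord_even b"
  then obtain l m where lm: "plus_fin l b m" "even m" unfolding ord_even_def by blast
  show "\<not> ord_even a"
  proof (cases m)
    case 0 then show ?thesis using lm s plus_fin_0 limit_or_zero_def by metis
  next
    case (Suc k)
    then obtain a0 where "plus_fin l a0 k" "is_succ a0 b" using lm plus_fin_Suc by blast
    then have "plus_fin l a k" using s succ_unique_pred by metis
    then show ?thesis using lm Suc plus_fin_uniq unfolding ord_even_def by fastforce
  qed
next
  assume s: "is_succ a b" and e: "\<not> ord_even a"
  obtain l m where lm: "plus_fin l a m" using plus_fin_ex by blast
  then have "odd m" using e plus_fin_lim unfolding ord_even_def by blast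
  then show "ord_even b" using lm s plus_fin.step plus_fin_lim unfolding ord_even_def
    by (metis even_Suc)
qed

lemma bounded_above:
  assumes "omega1_type TYPE('o::wellorder)" "countable (D::'o set)"
  shows "\<exists>c. \<forall>d\<in>D. d < c"
proof (rule ccontr)
  assume "\<not> ?thesis"
  then have "UNIV \<subseteq> (\<Union>d\<in>D. insert d {b. b < d})" by (auto simp: not_less) (metis antisym_conv1)
  moreover have "countable (\<Union>d\<in>D. insert d {b. b < d})"
    using assms unfolding omega1_type_def by auto
  ultimately show False using assms unfolding omega1_type_def using countable_subset by blast
qed

lemma succ_ex:
  assumes "omega1_type TYPE('o::wellorder)"
  shows "\<exists>b. is_succ (c::'o) b"
proof -
  obtain x where "c < x" using bounded_above[OF assms, of "{c}"] by auto
  then have "c < (LEAST x. c < x)" by (rule LeastI)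
  then show ?thesis unfolding is_succ_def using not_less_Least by blast
qed

lemma parity_avoid:
  assumes "omega1_type TYPE('o::wellorder)" "countable (D::'o set)"
  shows "\<exists>x. x \<notin> D \<and> ord_even x = P"
proof -
  obtain c where c: "\<forall>d\<in>D. d < c" using bounded_above[OF assms] by blast
  obtain b where b: "is_succ c b" using succ_ex[OF assms(1)] by blast
  then have "c < b" unfolding is_succ_def by blast
  then have "c \<notin> D" "b \<notin> D" using c by auto
  then show ?thesis using succ_parity[OF b] by metis
qed

lemma parity_uncountable:
  assumes "omega1_type TYPE('o::wellorder)" "countable (D::'o set)"
  shows "\<not> countable {x. x \<notin> D \<and> ord_even x = P}"
proof
  assume "countable {x. x \<notin> D \<and> ord_even x = P}"
  then have "countable (D \<union> {x. x \<notin> D \<and> ord_even x = P})" using assms by simp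
  from parity_avoid[OF assms(1) this, of P] show False by auto
qed

lemma sigma_ex:
  assumes om: "omega1_type TYPE('o::wellorder)" and cB: "countable (B::'o set)"
    and AB: "A \<subseteq> B" and CB: "C \<subseteq> B" and AC: "A \<inter> C = {}"
  shows "\<exists>\<sigma>. bij \<sigma> \<and> (\<forall>x. ord_even (\<sigma> x) = ord_even x) \<and> (\<forall>x\<in>C. \<sigma> x = x) \<and> (\<forall>x\<in>A. \<sigma> x \<notin> B)"
proof -
  have cA: "countable A" using cB AB countable_subset by blast
  have "\<exists>g::nat\<Rightarrow>'o. inj g \<and> range g \<subseteq> {x. x \<notin> B \<and> ord_even x = P}" for P
  proof -
    have "\<not> finite {x. x \<notin> B \<and> ord_even x = P}"
      using parity_uncountable[OF om cB, of P] countable_finite by blast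
    then show ?thesis by (rule infinite_countable_subset)
  qed
  then have "\<forall>P. \<exists>g::nat\<Rightarrow>'o. inj g \<and> range g \<subseteq> {x. x \<notin> B \<and> ord_even x = P}" by blast
  then have "\<exists>g::bool\<Rightarrow>nat\<Rightarrow>'o. \<forall>P. inj (g P) \<and> range (g P) \<subseteq> {x. x \<notin> B \<and> ord_even x = P}"
    by (rule choice)
  then obtain g :: "bool \<Rightarrow> nat \<Rightarrow> 'o" where g0: "\<forall>P. inj (g P) \<and> range (g P) \<subseteq> {x. x \<notin> B \<and> ord_even x = P}"
    by blast
  have g: "\<And>P. inj (g P)" "\<And>P. range (g P) \<subseteq> {x. x \<notin> B \<and> ord_even x = P}"
    using g0 by auto
  define f where "f x = g (ord_even x) (to_nat_on A x)" for x
  have fpar: "ord_even (f x) = ord_even x" for x using g(2) unfolding f_def by blast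
  have fB: "f x \<notin> B" for x using g(2) unfolding f_def by blast
  have finj: "inj_on f A"
  proof
    fix x y assume xy: "x \<in> A" "y \<in> A" "f x = f y"
    then have "ord_even x = ord_even y" using fpar by metis
    then have "g (ord_even x) (to_nat_on A x) = g (ord_even x) (to_nat_on A y)"
      using xy(3) unfolding f_def by simp
    then have "to_nat_on A x = to_nat_on A y" by (rule injD[OF g(1)])
    then show "x = y" using xy inj_on_to_nat_on[OF cA] by (meson inj_onD)
  qed
  define s where "s x = (if x \<in> A then f x else if x \<in> f ` A then inv_into A f x else x)" for x
  have ss: "s (s x) = x" for x
  proof -
    consider "x \<in> A" | "x \<notin> A" "x \<in> f ` A" | "x \<notin> A" "x \<notin> f ` A" by blast
    then show ?thesis
    proof cases
      case 1
      then have "f x \<notin> A" using fB AB by blast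
      then show ?thesis using 1 finj unfolding s_def by auto
    next
      case 2
      then have "inv_into A f x \<in> A" by (auto intro: inv_into_into)
      then show ?thesis using 2 unfolding s_def by (simp add: f_inv_into_f)
    qed (simp add: s_def)
  qed
  have "bij s" unfolding bij_def inj_def surj_def using ss by metis
  moreover have "ord_even (s x) = ord_even x" for x
  proof (cases "x \<in> A")
    case True then show ?thesis unfolding s_def using fpar by simp
  next
    case False
    show ?thesis
    proof (cases "x \<in> f ` A")
      case True
      then obtain y where y: "y \<in> A" "x = f y" by blast
      then have "inv_into A f x = y" using finj by simp
      then show ?thesis using False True y fpar unfolding s_def by simp
    qed (use False in \<open>simp add: s_def\<close>)
  qed
  moreover have "\<forall>x\<in>C. s x = x" using AC CB fB unfolding s_def by auto
  moreover have "\<forall>x\<in>A. s x \<notin> B" using fB unfolding s_def by auto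
  ultimately show ?thesis by blast
qed

definition pmap :: "('o list \<Rightarrow> 'o \<Rightarrow> 'o) \<Rightarrow> 'o list \<Rightarrow> 'o list" where
  "pmap \<sigma> i = map (\<lambda>k. \<sigma> (take k i) (i ! k)) [0..<length i]"

lemma pmap_Nil[simp]: "pmap \<sigma> [] = []" by (simp add: pmap_def)

lemma pmap_snoc[simp]: "pmap \<sigma> (xs @ [x]) = pmap \<sigma> xs @ [\<sigma> xs x]"
  unfolding pmap_def by (auto simp: nth_append)

lemma pmap_length[simp]: "length (pmap \<sigma> xs) = length xs"
  by (simp add: pmap_def)

lemma pmap_nth: "k < length i \<Longrightarrow> pmap \<sigma> i ! k = \<sigma> (take k i) (i ! k)"
  by (simp add: pmap_def)

lemma pmap_append_prefix: "prefix (pmap \<sigma> xs) (pmap \<sigma> (xs @ zs))"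
  by (induction zs rule: rev_induct) (auto simp flip: append_assoc intro: prefix_order.trans)

lemma pmap_prefix: "prefix xs ys \<Longrightarrow> prefix (pmap \<sigma> xs) (pmap \<sigma> ys)"
  unfolding prefix_def[of xs] using pmap_append_prefix by blast

lemma pmap_inj:
  assumes "\<And>s. inj (\<sigma> s)"
  shows "pmap \<sigma> i = pmap \<sigma> j \<Longrightarrow> i = j"
proof (induction i arbitrary: j rule: rev_induct)
  case Nil then show ?case by (metis pmap_length length_0_conv)
next
  case (snoc x xs)
  then obtain ys y where j: "j = ys @ [y]"
    by (metis pmap_length length_0_conv rev_exhaust snoc_eq_iff_butlast)
  then have "pmap \<sigma> xs = pmap \<sigma> ys" "\<sigma> xs x = \<sigma> ys y" using snoc.prems by auto
  then show ?case using snoc.IH j assms by (metis injD)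
qed

lemma pmap_surj:
  assumes "\<And>s. surj (\<sigma> s)"
  shows "\<exists>x. pmap \<sigma> x = y"
proof (induction y rule: rev_induct)
  case Nil then show ?case by (intro exI[of _ "[]"]) simp
next
  case (snoc b ys)
  then obtain xs where "pmap \<sigma> xs = ys" by blast
  moreover obtain a where "\<sigma> xs a = b" using assms by (metis surjD)
  ultimately show ?case by (metis pmap_snoc)
qed

lemma pmap_sprefix_iff:
  assumes "\<And>s. inj (\<sigma> s)"
  shows "strict_prefix (pmap \<sigma> i) (pmap \<sigma> j) \<longleftrightarrow> strict_prefix i j"
proof
  assume a: "strict_prefix (pmap \<sigma> i) (pmap \<sigma> j)"
  then have len: "length i < length j" using prefix_length_less by fastforce
  define j' where "j' = take (length i) j"
  have "prefix j' j" unfolding j'_def by (rule take_is_prefix)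
  then have p1: "prefix (pmap \<sigma> j') (pmap \<sigma> j)" by (rule pmap_prefix)
  have l1: "length j' = length i" using len unfolding j'_def by simp
  have p2: "prefix (pmap \<sigma> i) (pmap \<sigma> j)" using a by simp
  have "pmap \<sigma> j' = pmap \<sigma> i"
  proof (rule prefix_order.antisym)
    show "prefix (pmap \<sigma> j') (pmap \<sigma> i)"
      by (rule prefix_length_prefix[of "pmap \<sigma> j'" "pmap \<sigma> j" "pmap \<sigma> i"]) (use p1 p2 l1 in auto)
    show "prefix (pmap \<sigma> i) (pmap \<sigma> j')"
      by (rule prefix_length_prefix[of "pmap \<sigma> i" "pmap \<sigma> j" "pmap \<sigma> j'"]) (use p1 p2 l1 in auto)
  qed
  then have "j' = i" by (rule pmap_inj[OF assms])
  then show "strict_prefix i j" using \<open>prefix j' j\<close> len by (auto simp: strict_prefix_def)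
next
  assume "strict_prefix i j"
  then have "prefix i j" "length i < length j" using prefix_length_less by auto
  then show "strict_prefix (pmap \<sigma> i) (pmap \<sigma> j)"
    using pmap_prefix[of i j \<sigma>] by (auto simp: strict_prefix_def dest: arg_cong[where f=length])
qed

lemma Xi_down: "xi \<in> Xi \<Longrightarrow> xs @ [x] \<in> xi \<Longrightarrow> xs \<noteq> [] \<Longrightarrow> xs \<in> xi"
  unfolding Xi_def TT_def by (auto simp: strict_prefix_def)

lemma Xi_down2: "xi \<in> Xi \<Longrightarrow> ys \<in> xi \<Longrightarrow> strict_prefix xs ys \<Longrightarrow> xs \<noteq> [] \<Longrightarrow> xs \<in> xi"
  unfolding Xi_def TT_def by auto

theorem lemma4p17:
  fixes eta :: "'o::wellorder list set"
  assumes "omega1_type TYPE('o)"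
    and "eta \<in> Xi"
  shows "Pi_isolated eta"
  unfolding Pi_isolated_def
proof (intro ballI impI)
  fix xi :: "'o list set" assume xi: "xi \<in> Xi" and sub: "eta \<subseteq> xi"
  define Q where "Q s \<sigma> \<longleftrightarrow> bij \<sigma> \<and> (\<forall>x. ord_even (\<sigma> x) = ord_even x)
     \<and> (\<forall>x\<in>{\<alpha>. s @ [\<alpha>] \<in> eta}. \<sigma> x = x)
     \<and> (\<forall>x\<in>{\<alpha>. s @ [\<alpha>] \<in> xi \<and> s @ [\<alpha>] \<notin> eta}. \<sigma> x \<notin> {\<alpha>. s @ [\<alpha>] \<in> xi})" for s and \<sigma> :: "'o \<Rightarrow> 'o"
  have exQ: "\<exists>\<sigma>. Q s \<sigma>" for s
  proof -
    have "{\<alpha>. s @ [\<alpha>] \<in> xi} \<subseteq> last ` xi" by force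
    moreover have "countable xi" using xi unfolding Xi_def by blast
    ultimately have "countable {\<alpha>. s @ [\<alpha>] \<in> xi}" by (meson countable_image countable_subset)
    from sigma_ex[OF assms(1) this, of "{\<alpha>. s @ [\<alpha>] \<in> xi \<and> s @ [\<alpha>] \<notin> eta}" "{\<alpha>. s @ [\<alpha>] \<in> eta}"]
    show ?thesis using sub unfolding Q_def by blast
  qed
  define \<sigma> where "\<sigma> s = (SOME \<sigma>. Q s \<sigma>)" for s
  have Q: "Q s (\<sigma> s)" for s unfolding \<sigma>_def using exQ[of s] by (rule someI_ex)
  have bij: "bij (\<sigma> s)" for s using Q unfolding Q_def by blast
  have inj: "inj (\<sigma> s)" for s using bij bij_is_inj by blast
  have surj: "surj (\<sigma> s)" for s using bij bij_is_surj by blast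
  have par: "ord_even (\<sigma> s x) = ord_even x" for s x using Q unfolding Q_def by blast
  have fixC: "s @ [x] \<in> eta \<Longrightarrow> \<sigma> s x = x" for s x using Q unfolding Q_def by blast
  have mvA: "s @ [x] \<in> xi \<Longrightarrow> s @ [x] \<notin> eta \<Longrightarrow> s @ [\<sigma> s x] \<notin> xi" for s x
    using Q unfolding Q_def by blast
  define p where "p = pmap \<sigma>"
  have pnil: "p x = [] \<longleftrightarrow> x = []" for x unfolding p_def by (metis pmap_length length_0_conv)
  have fixe: "i \<in> eta \<or> i = [] \<Longrightarrow> p i = i" for i
  proof (induction i rule: rev_induct)
    case Nil then show ?case by (simp add: p_def)
  next
    case (snoc x xs)
    then have "xs \<in> eta \<or> xs = []" using Xi_down[OF assms(2)] by blast
    then show ?case using snoc fixC unfolding p_def by simp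
  qed
  have mv: "j \<in> xi \<Longrightarrow> j \<notin> eta \<Longrightarrow> p j \<notin> xi" for j
  proof (induction j rule: rev_induct)
    case Nil then show ?case using xi unfolding Xi_def TT_def by auto
  next
    case (snoc x xs)
    show ?case
    proof (cases "xs \<in> eta \<or> xs = []")
      case True
      then have "p xs = xs" using fixe by blast
      then show ?thesis using snoc.prems mvA unfolding p_def by simp
    next
      case False
      then have "xs \<in> xi" using Xi_down[OF xi] snoc.prems by blast
      then have "p xs \<notin> xi" using snoc.IH False by blast
      moreover have "strict_prefix (p xs) (p (xs @ [x]))" unfolding p_def by (simp add: strict_prefix_def)
      moreover have "p xs \<noteq> []" using False pnil by blast
      ultimately show ?thesis using Xi_down2[OF xi] by blast
    qed
  qed
  have "p \<in> PiG"
    unfolding PiG_def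
  proof (intro CollectI conjI ballI)
    show "bij_betw p TT TT"
      unfolding bij_betw_def
    proof
      show "inj_on p TT" unfolding p_def using pmap_inj[of \<sigma>, OF inj] by (meson inj_onI)
      show "p ` TT = TT"
      proof
        show "p ` TT \<subseteq> TT" unfolding TT_def using pnil by auto
        show "TT \<subseteq> p ` TT"
        proof
          fix y :: "'o list" assume y: "y \<in> TT"
          obtain x where x: "pmap \<sigma> x = y" using pmap_surj[of \<sigma>, OF surj] by blast
          then have "x \<in> TT" using y pnil unfolding TT_def p_def by auto
          then show "y \<in> p ` TT" using x unfolding p_def by blast
        qed
      qed
    qed
    show "strict_prefix i j \<longleftrightarrow> strict_prefix (p i) (p j)" for i j
      unfolding p_def using pmap_sprefix_iff[of \<sigma>, OF inj] by blast
    show "par_equiv (p i) i" for i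
      unfolding par_equiv_def p_def by (simp add: pmap_nth par)
  qed
  moreover have "\<forall>i\<in>eta. p i = i" using fixe by blast
  moreover have "xi \<inter> p ` xi = eta"
  proof
    show "xi \<inter> p ` xi \<subseteq> eta"
    proof
      fix y assume "y \<in> xi \<inter> p ` xi"
      then obtain j where j: "j \<in> xi" "y = p j" "p j \<in> xi" by blast
      then have "j \<in> eta" using mv by blast
      then show "y \<in> eta" using j fixe by simp
    qed
    show "eta \<subseteq> xi \<inter> p ` xi"
    proof
      fix y assume y: "y \<in> eta"
      then have "p y = y" using fixe by blast
      then show "y \<in> xi \<inter> p ` xi" using y sub by force
    qed
  qed
  ultimately show "\<exists>p\<in>PiG. (\<forall>i\<in>eta. p i = i) \<and> xi \<inter> p ` xi = eta" by blast
qed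
end
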